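(* Let $m\ge 2$ and $n\ge 2$ be integers. The number $D_F(m,n)$ of maximal antichains of $[m]^n$ is at least the number $D_E(m,n-1)$ of antichains (the empty set included) of $[m]^{n-1}$: $D_F(m,n)\ge D_E(m,n-1)$.
   Context: $[m]=\{1,\dots,m\}$ with its natural order; $[m]^k$ carries the componentwise (product) order. An antichain is a set of pairwise incomparable elements; it is maximal if no further element of the poset can be added while remaining an antichain. *)

theory Defs
  imports Main
begin

definition grid :: "nat \<Rightarrow> nat \<Rightarrow> nat list set" where
  "grid m k = {xs. length xs = k \<and> set xs \<subseteq> {1..m}}"

definition leq_prod :: "nat list \<Rightarrow> nat list \<Rightarrow> bool" where
  "leq_prod xs ys \<longleftrightarrow> list_all2 (\<le>) xs ys"

definition comparable :: "nat list \<Rightarrow> nat list \<Rightarrow> bool" where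
  "comparable xs ys \<longleftrightarrow> leq_prod xs ys \<or> leq_prod ys xs"

definition is_antichain :: "nat \<Rightarrow> nat \<Rightarrow> nat list set \<Rightarrow> bool" where
  "is_antichain m k A \<longleftrightarrow> A \<subseteq> grid m k \<and>
     (\<forall>x\<in>A. \<forall>y\<in>A. x \<noteq> y \<longrightarrow> \<not> comparable x y)"

definition is_max_antichain :: "nat \<Rightarrow> nat \<Rightarrow> nat list set \<Rightarrow> bool" where
  "is_max_antichain m k A \<longleftrightarrow> is_antichain m k A \<and>
     (\<forall>z\<in>grid m k. z \<notin> A \<longrightarrow> \<not> is_antichain m k (insert z A))"

definition D_E :: "nat \<Rightarrow> nat \<Rightarrow> nat" where
  "D_E m k = card {A. is_antichain m k A}"

definition D_F :: "nat \<Rightarrow> nat \<Rightarrow> nat" where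
  "D_F m k = card {A. is_max_antichain m k A}"

end

theory Submission
  imports Defs
begin
lemma lp_le: "list_all2 (\<le>) c b \<Longrightarrow> sum_list c \<le> sum_list (b::nat list)"
  by (induction rule: list_all2_induct) (simp_all add: add_mono)
lemma lp_less: "list_all2 (\<le>) c b \<Longrightarrow> c \<noteq> b \<Longrightarrow> sum_list c < sum_list (b::nat list)"
proof (induction rule: list_all2_induct)
  case Nil then show ?case by simp
next
  case (Cons x xs y ys)
  have le: "sum_list xs \<le> sum_list ys" using lp_le Cons(2) by blast
  show ?case
  proof (cases "xs = ys")
    case True
    then have "x \<noteq> y" using Cons(4) by simp
    then show ?thesis using True Cons(1) by simp
  next
    case False
    then show ?thesis using Cons(1,3) by simp
  qed
qed
lemma lp_antisym: "leq_prod a b \<Longrightarrow> leq_prod b a \<Longrightarrow> a = b"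
  unfolding leq_prod_def using lp_less less_asym by blast
lemma lp_refl: "leq_prod a a"
  unfolding leq_prod_def by (simp add: list_all2_refl)
lemma lp_trans: "leq_prod a b \<Longrightarrow> leq_prod b c \<Longrightarrow> leq_prod a c"
  unfolding leq_prod_def
  by (rule list_all2_trans[of "(\<le>)" "(\<le>)" "(\<le>)"]) (erule (1) order_trans)+
lemma lp_snoc: "length xs = length ys \<Longrightarrow>
   leq_prod (xs @ [s]) (ys @ [t]) \<longleftrightarrow> leq_prod xs ys \<and> s \<le> t"
  unfolding leq_prod_def by (simp add: list_all2_append)
lemma finite_grid: "finite (grid m k)"
proof -
  have "grid m k = {xs. set xs \<subseteq> {1..m} \<and> length xs = k}" unfolding grid_def by auto
  then show ?thesis using finite_lists_length_eq[of "{1..m}" k] by simp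
qed

lemma grid_snoc: "xs @ [t] \<in> grid m (Suc k) \<longleftrightarrow> xs \<in> grid m k \<and> t \<in> {1..m}"
  unfolding grid_def by auto

lemma grid_Suc_split: "z \<in> grid m (Suc k) \<Longrightarrow> \<exists>xs t. z = xs @ [t]"
  unfolding grid_def by (cases z rule: rev_cases) auto
lemma exists_min:
  assumes "x \<in> S"
  shows "\<exists>b\<in>S. leq_prod b x \<and> (\<forall>c\<in>S. leq_prod c b \<longrightarrow> c = b)"
proof -
  have ex: "x \<in> S \<and> leq_prod x x" using assms lp_refl by blast
  obtain b where b1: "b \<in> S \<and> leq_prod b x" and
    b3: "\<And>y. y \<in> S \<and> leq_prod y x \<Longrightarrow> sum_list b \<le> sum_list y"
    using ex_has_least_nat[where P="\<lambda>b. b \<in> S \<and> leq_prod b x" and m=sum_list, OF ex] by blast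
  have "\<forall>c\<in>S. leq_prod c b \<longrightarrow> c = b"
  proof (intro ballI impI, rule ccontr)
    fix c assume c: "c \<in> S" "leq_prod c b" "c \<noteq> b"
    then have "sum_list c < sum_list b" using lp_less unfolding leq_prod_def by blast
    moreover have "leq_prod c x" using lp_trans c(2) b1 by blast
    ultimately show False using b3[of c] c(1) by linarith
  qed
  then show ?thesis using b1 by blast
qed
theorem proposition5:
  fixes m n :: nat
  assumes "m \<ge> 2" and "n \<ge> 2"
  shows "D_F m n \<ge> D_E m (n - 1)"
proof -
  define k where "k = n - 1"
  have nk: "n = Suc k" using assms(2) k_def by simp
  define U where "U A = {x \<in> grid m k. \<not> (\<exists>a\<in>A. leq_prod x a)}" for A
  define mins where "mins S = {b\<in>S. \<forall>c\<in>S. leq_prod c b \<longrightarrow> c = b}" for S :: "nat list set"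
  define F where "F A = (\<lambda>a. a @ [m]) ` A \<union> (\<lambda>b. b @ [1]) ` mins (U A)" for A
  have m1: "m \<noteq> 1" "1 \<le> m" using assms(1) by auto
  have inj: "inj_on F {A. is_antichain m k A}"
  proof (rule inj_onI)
    fix A B assume "A \<in> {A. is_antichain m k A}" "B \<in> {A. is_antichain m k A}" "F A = F B"
    have "A = {a. a @ [m] \<in> F A}" for A
      unfolding F_def using m1 by auto
    then show "A = B" using \<open>F A = F B\<close> by metis
  qed
  have maps: "F A \<in> {A. is_max_antichain m n A}" if "is_antichain m k A" for A
  proof -
    have Ag: "A \<subseteq> grid m k" and Aac: "\<forall>x\<in>A. \<forall>y\<in>A. x \<noteq> y \<longrightarrow> \<not> comparable x y"
      using that unfolding is_antichain_def by auto
    have lenA: "length a = k" if "a \<in> A" for a using Ag that grid_def by auto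
    have lenU: "length b = k" if "b \<in> mins (U A)" for b
      using that unfolding mins_def U_def grid_def by auto
    have sub: "F A \<subseteq> grid m n"
      unfolding F_def nk using Ag m1 by (auto simp: grid_snoc mins_def U_def)
    have ac: "\<forall>x\<in>F A. \<forall>y\<in>F A. x \<noteq> y \<longrightarrow> \<not> comparable x y"
    proof (intro ballI impI)
      fix x y assume x: "x \<in> F A" and y: "y \<in> F A" and xy: "x \<noteq> y"
      show "\<not> comparable x y"
      proof (cases "x \<in> (\<lambda>a. a @ [m]) ` A")
        case True
        then obtain a where a: "a \<in> A" "x = a @ [m]" by auto
        show ?thesis
        proof (cases "y \<in> (\<lambda>a. a @ [m]) ` A")
          case True
          then obtain a' where a': "a' \<in> A" "y = a' @ [m]" by auto
          then show ?thesis using a Aac xy lenA unfolding comparable_def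
            by (auto simp: lp_snoc)
        next
          case False
          then obtain b where b: "b \<in> mins (U A)" "y = b @ [1]" using y F_def by auto
          then show ?thesis using a lenA lenU m1 unfolding comparable_def
            by (auto simp: lp_snoc mins_def U_def)
        qed
      next
        case False
        then obtain b where b: "b \<in> mins (U A)" "x = b @ [1]" using x F_def by auto
        show ?thesis
        proof (cases "y \<in> (\<lambda>a. a @ [m]) ` A")
          case True
          then obtain a where a: "a \<in> A" "y = a @ [m]" by auto
          then show ?thesis using b lenA lenU m1 unfolding comparable_def
            by (auto simp: lp_snoc mins_def U_def)
        next
          case False
          then obtain b' where b': "b' \<in> mins (U A)" "y = b' @ [1]" using y F_def by auto
          then show ?thesis using b lenU xy unfolding comparable_def
            by (auto simp: lp_snoc mins_def)
        qed
      qed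
    qed
    have isac: "is_antichain m n (F A)" using sub ac is_antichain_def by blast
    have maxi: "\<not> is_antichain m n (insert z (F A))" if z: "z \<in> grid m n" "z \<notin> F A" for z
    proof -
      obtain x t where zt: "z = x @ [t]" using grid_Suc_split z nk by blast
      have xg: "x \<in> grid m k" and t: "t \<in> {1..m}" using z zt nk grid_snoc by auto
      have lx: "length x = k" using xg grid_def by auto
      show ?thesis
      proof (cases "\<exists>a\<in>A. leq_prod x a")
        case True
        then obtain a where a: "a \<in> A" "leq_prod x a" by blast
        have "a @ [m] \<in> F A" using a F_def by auto
        moreover have "comparable z (a @ [m])" using a t lx lenA zt
          unfolding comparable_def by (auto simp: lp_snoc)
        moreover have "z \<noteq> a @ [m]" using z calculation by auto
        ultimately show ?thesis unfolding is_antichain_def by blast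
      next
        case False
        then have "x \<in> U A" using xg U_def by auto
        then obtain b where b: "b \<in> U A" "leq_prod b x" "\<forall>c\<in>U A. leq_prod c b \<longrightarrow> c = b"
          using exists_min by blast
        have bm: "b \<in> mins (U A)" using b mins_def by auto
        have "b @ [1] \<in> F A" using bm F_def by auto
        moreover have "comparable z (b @ [1])" using b t lx lenU[OF bm] zt
          unfolding comparable_def by (auto simp: lp_snoc)
        moreover have "z \<noteq> b @ [1]" using z calculation by auto
        ultimately show ?thesis unfolding is_antichain_def by blast
      qed
    qed
    show ?thesis using isac maxi is_max_antichain_def by blast
  qed
  have fin: "finite {A. is_max_antichain m n A}"
  proof (rule finite_subset[of _ "Pow (grid m n)"])
    show "{A. is_max_antichain m n A} \<subseteq> Pow (grid m n)"
      unfolding is_max_antichain_def is_antichain_def by auto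
  qed (simp add: finite_grid)
  have "card {A. is_antichain m k A} \<le> card {A. is_max_antichain m n A}"
    by (rule card_inj_on_le[OF inj _ fin]) (use maps in blast)
  then show ?thesis unfolding D_E_def D_F_def k_def .
qed

end
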